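(* Let $k$ be an algebraically closed field and $\underline{x},\underline{y}$ sequences of positive integers, and let $C_n=C_n(\underline{x},\underline{y})$ be the Cartan matrix of $A_n(\underline{x},\underline{y})$. Then for $m\geq1$, $$C_{2m}= C_{2m-1}\begin{pmatrix} 1 & y_m \\ 0 & 1 \end{pmatrix} = \begin{pmatrix} F_{2m-1}(\underline{y},S\underline{x}) & F_{2m}(\underline{y},S\underline{x}) \\ F_{2m}(\underline{x},\underline{y}) & F_{2m+1}(\underline{x},\underline{y}) \end{pmatrix},$$ and for $m\geq 0$ (with $C_0$ the identity matrix) $$C_{2m+1}=C_{2m}\begin{pmatrix} 1 & 0 \\ x_{m+1} & 1 \end{pmatrix} = \begin{pmatrix} F_{2m+1}(\underline{y},S\underline{x}) & F_{2m}(\underline{y},S\underline{x})\\ F_{2m+2}(\underline{x},\underline{y}) & F_{2m+1}(\underline{x},\underline{y}) \end{pmatrix}.$$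
   Context: Paths are composed right to left: for arrows $\rho,\sigma$, $\rho\sigma$ denotes the path $\sigma$ followed by $\rho$. For sequences of positive integers $\underline{x}=(x_1,x_2,\dots)$, $\underline{y}=(y_1,y_2,\dots)$ and $n\geq0$, $A_n(\underline{x},\underline{y})$ is the quotient of the path algebra of the quiver with vertices $1,2$, arrows $\alpha_{i,j}:1\to2$ ($1\le i\le\lfloor\frac{n+1}{2}\rfloor$, $1\le j\le x_i$) and arrows $\beta_{i,j}:2\to1$ ($1\le i\le\lfloor\frac n2\rfloor$, $1\le j\le y_i$), by the ideal generated by $\alpha_{i,j}\beta_{i',j'}$ for $i'<i$ and $\beta_{i',j'}\alpha_{i,j}$ for $i\le i'$ (all admissible $j,j'$). With $e_1,e_2$ the trivial paths, the Cartan matrix is $C_n(\underline{x},\underline{y})=(c_{ij})$, $c_{ij}=\dim_k e_iA_n(\underline{x},\underline{y})e_j$ (the number of nonzero paths from $j$ to $i$). For sequences $\underline{u},\underline{v}$, the generalized Fibonacci numbers are $F_0(\underline{u},\underline{v})=0$, $F_1(\underline{u},\underline{v})=1$, $F_{2m}(\underline{u},\underline{v})=F_{2m-2}(\underline{u},\underline{v})+F_{2m-1}(\underline{u},\underline{v})u_m$, $F_{2m+1}(\underline{u},\underline{v})=F_{2m-1}(\underline{u},\underline{v})+F_{2m}(\underline{u},\underline{v})v_m$ for $m\geq1$. $S\underline{x}=(x_2,x_3,\dots)$ is the shift. *)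

theory Defs
  imports Main
begin

text \<open>Sequences of positive integers are functions nat => nat, indexed from 1
  (the value at 0 is irrelevant).  Shift: S x = (x 2, x 3, ...).\<close>

definition shift :: "(nat \<Rightarrow> nat) \<Rightarrow> nat \<Rightarrow> nat" where
  "shift x = (\<lambda>i. x (Suc i))"

fun gfib :: "(nat \<Rightarrow> nat) \<Rightarrow> (nat \<Rightarrow> nat) \<Rightarrow> nat \<Rightarrow> nat" where
  "gfib u v 0 = 0"
| "gfib u v (Suc 0) = 1"
| "gfib u v (Suc (Suc n)) =
     gfib u v n + gfib u v (Suc n) * (if even n then u ((n + 2) div 2) else v ((n + 1) div 2))"

datatype arrow = Alpha nat nat | Beta nat nat

fun src :: "arrow \<Rightarrow> nat" where
  "src (Alpha i j) = 1" | "src (Beta i j) = 2"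

fun tgt :: "arrow \<Rightarrow> nat" where
  "tgt (Alpha i j) = 2" | "tgt (Beta i j) = 1"

fun arrow_of :: "nat \<Rightarrow> (nat \<Rightarrow> nat) \<Rightarrow> (nat \<Rightarrow> nat) \<Rightarrow> arrow \<Rightarrow> bool" where
  "arrow_of n x y (Alpha i j) = (1 \<le> i \<and> i \<le> (n + 1) div 2 \<and> 1 \<le> j \<and> j \<le> x i)"
| "arrow_of n x y (Beta i j) = (1 \<le> i \<and> i \<le> n div 2 \<and> 1 \<le> j \<and> j \<le> y i)"

text \<open>killed a b: the length-2 path "a followed by b" (i.e. the product b a)
  lies in the ideal of relations: alpha_{i,j} beta_{i',j'} = 0 for i' < i and
  beta_{i',j'} alpha_{i,j} = 0 for i <= i'.\<close>
fun killed :: "arrow \<Rightarrow> arrow \<Rightarrow> bool" where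
  "killed (Beta i' j') (Alpha i j) = (i' < i)"
| "killed (Alpha i j) (Beta i' j') = (i \<le> i')"
| "killed _ _ = False"

text \<open>Nonzero paths from vertex a to vertex b in A_n(x,y): lists of arrows in
  order of traversal (the empty list is the trivial path e_a, only when a = b),
  composable, and containing no relation as a subpath (the ideal is monomial,
  so these paths form a basis of the quotient).\<close>
definition nonzero_paths ::
  "nat \<Rightarrow> (nat \<Rightarrow> nat) \<Rightarrow> (nat \<Rightarrow> nat) \<Rightarrow> nat \<Rightarrow> nat \<Rightarrow> arrow list set" where
  "nonzero_paths n x y a b =
    {p. (\<forall>r \<in> set p. arrow_of n x y r)
      \<and> (p = [] \<longrightarrow> a = b)
      \<and> (p \<noteq> [] \<longrightarrow> src (hd p) = a \<and> tgt (last p) = b)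
      \<and> (\<forall>k. Suc k < length p \<longrightarrow> tgt (p ! k) = src (p ! Suc k))
      \<and> (\<forall>k. Suc k < length p \<longrightarrow> \<not> killed (p ! k) (p ! Suc k))}"

definition mat2 :: "nat \<Rightarrow> nat \<Rightarrow> nat \<Rightarrow> nat \<Rightarrow> nat \<Rightarrow> nat \<Rightarrow> nat" where
  "mat2 a b c d = (\<lambda>i j. if i = 1 \<and> j = 1 then a else if i = 1 \<and> j = 2 then b
                     else if i = 2 \<and> j = 1 then c else if i = 2 \<and> j = 2 then d else 0)"

definition mmult2 :: "(nat \<Rightarrow> nat \<Rightarrow> nat) \<Rightarrow> (nat \<Rightarrow> nat \<Rightarrow> nat) \<Rightarrow> nat \<Rightarrow> nat \<Rightarrow> nat" where
  "mmult2 A B = (\<lambda>i j. \<Sum>k\<in>{1,2}. A i k * B k j)"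

definition cartan :: "nat \<Rightarrow> (nat \<Rightarrow> nat) \<Rightarrow> (nat \<Rightarrow> nat) \<Rightarrow> nat \<Rightarrow> nat \<Rightarrow> nat" where
  "cartan n x y = (\<lambda>i j. if i \<in> {1,2} \<and> j \<in> {1,2} then card (nonzero_paths n x y j i) else 0)"

end

theory Submission
  imports Defs
begin

fun pok :: "nat \<Rightarrow> (nat \<Rightarrow> nat) \<Rightarrow> (nat \<Rightarrow> nat) \<Rightarrow> nat \<Rightarrow> nat \<Rightarrow> arrow list \<Rightarrow> bool" where
  "pok n x y a b [] = (a = b)"
| "pok n x y a b (r # p) = (arrow_of n x y r \<and> src r = a \<and> pok n x y (tgt r) b p
      \<and> (p \<noteq> [] \<longrightarrow> \<not> killed r (hd p)))"

lemma adj_cons: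
  "(\<forall>k. Suc k < length (r#p) \<longrightarrow> R ((r#p)!k) ((r#p)!Suc k)) \<longleftrightarrow>
   ((p \<noteq> [] \<longrightarrow> R r (hd p)) \<and> (\<forall>k. Suc k < length p \<longrightarrow> R (p!k) (p!Suc k)))"
  apply (cases p)
   apply simp
  apply (auto simp: nth_Cons split: nat.splits)
  done

lemma np_pok_mem: "(p \<in> nonzero_paths n x y a b) = pok n x y a b p"
proof (induction p arbitrary: a)
  case Nil
  then show ?case by (simp add: nonzero_paths_def)
next
  case (Cons r p)
  have "(r # p \<in> nonzero_paths n x y a b) =
     (arrow_of n x y r \<and> src r = a \<and> (p \<noteq> [] \<longrightarrow> tgt r = src (hd p)) \<and> (p \<noteq> [] \<longrightarrow> \<not> killed r (hd p))
      \<and> (\<forall>r\<in>set p. arrow_of n x y r) \<and> (p = [] \<longrightarrow> tgt r = b) \<and> (p \<noteq> [] \<longrightarrow> tgt (last p) = b)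
      \<and> (\<forall>k. Suc k < length p \<longrightarrow> tgt (p ! k) = src (p ! Suc k))
      \<and> (\<forall>k. Suc k < length p \<longrightarrow> \<not> killed (p ! k) (p ! Suc k)))"
    unfolding nonzero_paths_def mem_Collect_eq adj_cons[where R="\<lambda>u v. tgt u = src v"]
      adj_cons[where R="\<lambda>u v. \<not> killed u v"]
    by auto
  also have "\<dots> = pok n x y a b (r # p)"
    using Cons.IH[of "tgt r"] unfolding nonzero_paths_def by auto
  finally show ?case .
qed

lemma np_pok: "nonzero_paths n x y a b = {p. pok n x y a b p}"
  using np_pok_mem by blast

lemma arrow_mono: "arrow_of n x y r \<Longrightarrow> n \<le> n' \<Longrightarrow> arrow_of n' x y r"
  by (cases r) (auto intro: order_trans div_le_mono)

lemma pok_mono: "pok n x y a b p \<Longrightarrow> n \<le> n' \<Longrightarrow> pok n' x y a b p"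
  by (induction p arbitrary: a) (auto intro: arrow_mono)

lemma src12: "src r = 1 \<or> src r = 2"
  by (cases r) auto

lemma tgt12: "tgt r = 1 \<or> tgt r = 2"
  by (cases r) auto

lemma even_tail:
  assumes "1 \<le> m"
  shows "pok (2*m) x y a b p \<Longrightarrow> (\<forall>j. p \<noteq> [] \<longrightarrow> hd p \<noteq> Beta m j) \<Longrightarrow> pok (2*m-1) x y a b p"
proof (induction p arbitrary: a)
  case Nil
  then show ?case by simp
next
  case (Cons r p)
  have ar: "arrow_of (2*m-1) x y r"
    using Cons.prems assms by (cases r) auto
  have hp: "\<forall>j. p \<noteq> [] \<longrightarrow> hd p \<noteq> Beta m j"
  proof (intro allI impI)
    fix j assume "p \<noteq> []"
    then obtain s q where p: "p = s # q" by (cases p) auto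
    show "hd p \<noteq> Beta m j"
    proof
      assume h: "hd p = Beta m j"
      show False
        using Cons.prems(1) p h by (cases r) auto
    qed
  qed
  show ?case using Cons.prems ar Cons.IH hp by auto
qed

lemma odd_tail:
  shows "pok (2*m+1) x y a b p \<Longrightarrow> (\<forall>j. p \<noteq> [] \<longrightarrow> hd p \<noteq> Alpha (m+1) j) \<Longrightarrow> pok (2*m) x y a b p"
proof (induction p arbitrary: a)
  case Nil
  then show ?case by simp
next
  case (Cons r p)
  have ar: "arrow_of (2*m) x y r"
    using Cons.prems by (cases r) auto
  have hp: "\<forall>j. p \<noteq> [] \<longrightarrow> hd p \<noteq> Alpha (m+1) j"
  proof (intro allI impI)
    fix j assume "p \<noteq> []"
    then obtain s q where p: "p = s # q" by (cases p) auto
    show "hd p \<noteq> Alpha (m+1) j"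
    proof
      assume h: "hd p = Alpha (m+1) j"
      show False
        using Cons.prems(1) p h by (cases r) auto
    qed
  qed
  show ?case using Cons.prems ar Cons.IH hp by auto
qed


lemma pok_hd: "pok n x y a b p \<Longrightarrow> p \<noteq> [] \<Longrightarrow> src (hd p) = a"
  by (cases p) auto

lemma pok_other: "a \<noteq> 1 \<Longrightarrow> a \<noteq> 2 \<Longrightarrow> pok n x y a b p \<Longrightarrow> p = []"
  by (cases p) (use src12 in auto)

lemma pok_zero: "pok 0 x y a b p \<Longrightarrow> p = []"
  by (cases p; cases "hd p") auto

lemma E1:
  assumes "1 \<le> m"
  shows "nonzero_paths (2*m) x y 1 b = nonzero_paths (2*m-1) x y 1 b"
proof -
  have "pok (2*m) x y 1 b p \<Longrightarrow> pok (2*m-1) x y 1 b p" for p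
    by (rule even_tail[OF assms]) (auto dest!: pok_hd)
  moreover have "pok (2*m-1) x y 1 b p \<Longrightarrow> pok (2*m) x y 1 b p" for p
    by (erule pok_mono) simp
  ultimately show ?thesis unfolding np_pok by blast
qed

lemma E2:
  assumes "1 \<le> m"
  shows "nonzero_paths (2*m) x y 2 b = nonzero_paths (2*m-1) x y 2 b \<union>
     (\<lambda>(j,q). Beta m j # q) ` ({1..y m} \<times> nonzero_paths (2*m-1) x y 1 b)"
proof -
  have "p \<in> nonzero_paths (2*m-1) x y 2 b \<union>
     (\<lambda>(j,q). Beta m j # q) ` ({1..y m} \<times> nonzero_paths (2*m-1) x y 1 b)"
    if h: "pok (2*m) x y 2 b p" for p
  proof (cases "\<exists>j q. p = Beta m j # q")
    case True
    then obtain j q where p: "p = Beta m j # q" by blast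
    have "pok (2*m) x y 1 b q" "1 \<le> j" "j \<le> y m" using h p by auto
    then have "pok (2*m-1) x y 1 b q"
      by (intro even_tail[OF assms]) (auto dest!: pok_hd)
    then show ?thesis using p \<open>1 \<le> j\<close> \<open>j \<le> y m\<close> by (auto simp: np_pok)
  next
    case False
    then have "pok (2*m-1) x y 2 b p"
      by (intro even_tail[OF assms] h) (auto simp: neq_Nil_conv)
    then show ?thesis by (auto simp: np_pok)
  qed
  moreover have "pok (2*m) x y 2 b (Beta m j # q)"
    if "1 \<le> j" "j \<le> y m" "pok (2*m-1) x y 1 b q" for j q
  proof -
    have q: "pok (2*m) x y 1 b q" using that(3) by (rule pok_mono) simp
    have "q \<noteq> [] \<Longrightarrow> \<not> killed (Beta m j) (hd q)"
      using that(3) assms by (cases q; cases "hd q") auto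
    then show ?thesis using q that assms by auto
  qed
  moreover have "pok (2*m-1) x y 2 b p \<Longrightarrow> pok (2*m) x y 2 b p" for p
    by (erule pok_mono) simp
  ultimately show ?thesis unfolding np_pok by (intro set_eqI iffI) (simp, force)
qed

lemma E_disj:
  assumes "1 \<le> m"
  shows "nonzero_paths (2*m-1) x y 2 b \<inter>
     (\<lambda>(j,q). Beta m j # q) ` ({1..y m} \<times> nonzero_paths (2*m-1) x y 1 b) = {}"
  using assms by (auto simp: np_pok)

lemma O1:
  shows "nonzero_paths (2*m+1) x y 2 b = nonzero_paths (2*m) x y 2 b"
proof -
  have "pok (2*m+1) x y 2 b p \<Longrightarrow> pok (2*m) x y 2 b p" for p
    by (rule odd_tail) (auto dest!: pok_hd)
  moreover have "pok (2*m) x y 2 b p \<Longrightarrow> pok (2*m+1) x y 2 b p" for p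
    by (erule pok_mono) simp
  ultimately show ?thesis unfolding np_pok by blast
qed

lemma O2:
  shows "nonzero_paths (2*m+1) x y 1 b = nonzero_paths (2*m) x y 1 b \<union>
     (\<lambda>(j,q). Alpha (m+1) j # q) ` ({1..x (m+1)} \<times> nonzero_paths (2*m) x y 2 b)"
proof -
  have "p \<in> nonzero_paths (2*m) x y 1 b \<union>
     (\<lambda>(j,q). Alpha (m+1) j # q) ` ({1..x (m+1)} \<times> nonzero_paths (2*m) x y 2 b)"
    if h: "pok (2*m+1) x y 1 b p" for p
  proof (cases "\<exists>j q. p = Alpha (m+1) j # q")
    case True
    then obtain j q where p: "p = Alpha (m+1) j # q" by blast
    have "pok (2*m+1) x y 2 b q" "1 \<le> j" "j \<le> x (m+1)" using h p by auto
    then have "pok (2*m) x y 2 b q"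
      by (intro odd_tail) (auto dest!: pok_hd)
    then show ?thesis using p \<open>1 \<le> j\<close> \<open>j \<le> x (m+1)\<close> by (auto simp: np_pok)
  next
    case False
    then have "pok (2*m) x y 1 b p"
      by (intro odd_tail h) (auto simp: neq_Nil_conv)
    then show ?thesis by (auto simp: np_pok)
  qed
  moreover have "pok (2*m+1) x y 1 b (Alpha (m+1) j # q)"
    if "1 \<le> j" "j \<le> x (m+1)" "pok (2*m) x y 2 b q" for j q
  proof -
    have q: "pok (2*m+1) x y 2 b q" using that(3) by (rule pok_mono) simp
    have "q \<noteq> [] \<Longrightarrow> \<not> killed (Alpha (m+1) j) (hd q)"
      using that(3) by (cases q; cases "hd q") auto
    then show ?thesis using q that by auto
  qed
  moreover have "pok (2*m) x y 1 b p \<Longrightarrow> pok (2*m+1) x y 1 b p" for p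
    by (erule pok_mono) simp
  ultimately show ?thesis unfolding np_pok by (intro set_eqI iffI) (simp, force)
qed

lemma O_disj:
  shows "nonzero_paths (2*m) x y 1 b \<inter>
     (\<lambda>(j,q). Alpha (m+1) j # q) ` ({1..x (m+1)} \<times> nonzero_paths (2*m) x y 2 b) = {}"
  by (auto simp: np_pok)


lemma fin: "finite (nonzero_paths n x y a b)"
proof (induction n arbitrary: a b)
  case 0
  have "nonzero_paths 0 x y a b \<subseteq> {[]}" using pok_zero by (auto simp: np_pok)
  then show ?case by (rule finite_subset) simp
next
  case (Suc n)
  show ?case
  proof (cases "a = 1 \<or> a = 2")
    case False
    have "nonzero_paths (Suc n) x y a b \<subseteq> {[]}" using pok_other False by (auto simp: np_pok)
    then show ?thesis by (rule finite_subset) simp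
  next
    case a: True
    show ?thesis
    proof (cases "even (Suc n)")
      case True
      then obtain m where m: "Suc n = 2*m" by blast
      then have m1: "1 \<le> m" "2*m-1 = n" by auto
      show ?thesis using a unfolding m
      proof (elim disjE)
        assume "a = 1"
        then show "finite (nonzero_paths (2*m) x y a b)"
          unfolding \<open>a = 1\<close> E1[OF m1(1)] m1(2) by (simp add: Suc.IH)
      next
        assume "a = 2"
        show "finite (nonzero_paths (2*m) x y a b)"
          unfolding \<open>a = 2\<close> E2[OF m1(1)] m1(2)
          by (intro finite_UnI finite_imageI finite_cartesian_product Suc.IH) simp_all
      qed
    next
      case False
      then obtain m where m: "Suc n = 2*m+1" using oddE by blast
      then have m1: "2*m = n" by auto
      show ?thesis using a unfolding m
      proof (elim disjE)
        assume "a = 2"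
        then show "finite (nonzero_paths (2*m+1) x y a b)"
          unfolding \<open>a = 2\<close> O1 unfolding m1 by (simp add: Suc.IH)
      next
        assume "a = 1"
        show "finite (nonzero_paths (2*m+1) x y a b)"
          unfolding \<open>a = 1\<close> O2 unfolding m1
          by (intro finite_UnI finite_imageI finite_cartesian_product Suc.IH) simp_all
      qed
    qed
  qed
qed

lemma card_img:
  assumes "inj (f::nat \<Rightarrow> arrow)"
  shows "card ((\<lambda>(j,q). f j # q) ` ({1..k} \<times> Q)) = k * card Q"
proof -
  have "inj_on (\<lambda>(j,q). f j # q) ({1..k} \<times> Q)"
    using assms by (auto simp: inj_on_def inj_def)
  then show ?thesis by (simp add: card_image card_cartesian_product)
qed

lemma cE2:
  assumes "1 \<le> m"
  shows "card (nonzero_paths (2*m) x y 2 b) =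
    card (nonzero_paths (2*m-1) x y 2 b) + y m * card (nonzero_paths (2*m-1) x y 1 b)"
  unfolding E2[OF assms]
  apply (subst card_Un_disjoint[OF fin _ E_disj[OF assms]])
   apply (intro finite_imageI finite_cartesian_product fin; simp)
  apply (subst card_img)
   apply (simp add: inj_def)
  apply (rule refl)
  done

lemma cO2:
  shows "card (nonzero_paths (2*m+1) x y 1 b) =
    card (nonzero_paths (2*m) x y 1 b) + x (m+1) * card (nonzero_paths (2*m) x y 2 b)"
  unfolding O2
  apply (subst card_Un_disjoint[OF fin _ O_disj])
   apply (intro finite_imageI finite_cartesian_product fin; simp)
  apply (subst card_img)
   apply (simp add: inj_def)
  apply (rule refl)
  done

lemma cart0: "cartan 0 x y = mat2 1 0 0 1"
proof -
  have "nonzero_paths 0 x y a b = (if a = b then {[]} else {})" for a b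
  proof -
    have "pok 0 x y a b p \<longleftrightarrow> p = [] \<and> a = b" for p
      by (cases p; cases "hd p") auto
    then show ?thesis by (auto simp: np_pok)
  qed
  then show ?thesis by (auto simp: cartan_def mat2_def fun_eq_iff)
qed

lemma cartE:
  assumes "1 \<le> m"
  shows "cartan (2*m) x y = mmult2 (cartan (2*m - 1) x y) (mat2 1 (y m) 0 1)"
  using assms by (auto simp: fun_eq_iff cartan_def mmult2_def mat2_def E1[OF assms, simplified] cE2[OF assms, simplified])

lemma cartO:
  shows "cartan (2*m+1) x y = mmult2 (cartan (2*m) x y) (mat2 1 0 (x (m+1)) 1)"
  by (auto simp: fun_eq_iff cartan_def mmult2_def mat2_def O1[simplified] cO2[simplified])


lemma mm2: "mmult2 (mat2 a b c d) (mat2 e f g h) = mat2 (a*e+b*g) (a*f+b*h) (c*e+d*g) (c*f+d*h)"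
  by (auto simp: fun_eq_iff mmult2_def mat2_def)

lemma gfib_even: "gfib u v (2*m+2) = gfib u v (2*m) + gfib u v (2*m+1) * u (m+1)"
proof -
  have "2*m+2 = Suc (Suc (2*m))" by simp
  then show ?thesis by simp
qed

lemma gfib_odd: "gfib u v (2*m+3) = gfib u v (2*m+1) + gfib u v (2*m+2) * v (m+1)"
proof -
  have e: "2*m+3 = Suc (Suc (2*m+1))" "2*m+2 = Suc (2*m+1)" by simp_all
  have "gfib u v (Suc (Suc (2*m+1))) = gfib u v (2*m+1) + gfib u v (Suc (2*m+1)) * v (m+1)"
    by (subst gfib.simps(3)) (simp del: gfib.simps)
  then show ?thesis unfolding e .
qed

lemma step_even:
  "cartan (2*k+2) x y = mat2 (gfib y (shift x) (2*k + 1)) (gfib y (shift x) (2*k+2))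
      (gfib x y (2*k + 2)) (gfib x y (2*k + 3))"
  if o: "cartan (2*k + 1) x y =
     mat2 (gfib y (shift x) (2*k + 1)) (gfib y (shift x) (2*k)) (gfib x y (2*k + 2)) (gfib x y (2*k + 1))"
proof -
  have c: "cartan (2*k+2) x y = mmult2 (cartan (2*k+1) x y) (mat2 1 (y (k+1)) 0 1)"
    using cartE[of "k+1" x y] by simp
  have f1: "gfib x y (2*k+3) = gfib x y (2*k+1) + gfib x y (2*k+2) * y (k+1)"
    by (rule gfib_odd)
  have f3: "gfib y (shift x) (2*k+2) = gfib y (shift x) (2*k) + gfib y (shift x) (2*k+1) * y (k+1)"
    by (rule gfib_even)
  show ?thesis unfolding c o mm2 f1 f3 by (simp add: algebra_simps)
qed

lemma step_odd:
  "cartan (2*k+3) x y = mat2 (gfib y (shift x) (2*k + 3)) (gfib y (shift x) (2*k+2))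
      (gfib x y (2*k + 4)) (gfib x y (2*k + 3))"
  if o: "cartan (2*k+2) x y = mat2 (gfib y (shift x) (2*k + 1)) (gfib y (shift x) (2*k+2))
      (gfib x y (2*k + 2)) (gfib x y (2*k + 3))"
proof -
  have eqs: "2*(k+1)+1 = 2*k+3" "k+1+1 = k+2" "2*(k+1) = 2*k+2" by simp_all
  have c: "cartan (2*k+3) x y = mmult2 (cartan (2*k+2) x y) (mat2 1 0 (x (k+2)) 1)"
  proof -
    have "2*k+3 = 2*(k+1)+1" "k+2 = (k+1)+1" "2*k+2 = 2*(k+1)" by simp_all
    then show ?thesis using cartO[of "k+1" x y] by metis
  qed
  have f1: "gfib y (shift x) (2*k+3) = gfib y (shift x) (2*k+1) + gfib y (shift x) (2*k+2) * x (k+2)"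
    using gfib_odd[of y "shift x" k] by (simp add: shift_def)
  have f3: "gfib x y (2*k+4) = gfib x y (2*k+2) + gfib x y (2*k+3) * x (k+2)"
  proof -
    have "2*k+4 = 2*(k+1)+2" "k+2 = (k+1)+1" "2*k+2 = 2*(k+1)" "2*k+3 = 2*(k+1)+1" by simp_all
    then show ?thesis using gfib_even[of x y "k+1"] by metis
  qed
  show ?thesis unfolding c o mm2 f1 f3 by (simp add: algebra_simps)
qed

lemma odd_form:
  "cartan (2*m + 1) x y =
     mat2 (gfib y (shift x) (2*m + 1)) (gfib y (shift x) (2*m)) (gfib x y (2*m + 2)) (gfib x y (2*m + 1))"
proof (induction m)
  case 0
  show ?case using cartO[of 0 x y] by (simp add: cart0 mm2 numeral_2_eq_2)
next
  case (Suc m)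
  have "cartan (2*m+3) x y = mat2 (gfib y (shift x) (2*m + 3)) (gfib y (shift x) (2*m+2))
      (gfib x y (2*m + 4)) (gfib x y (2*m + 3))"
    by (rule step_odd[OF step_even[OF Suc.IH]])
  moreover have "2*Suc m + 1 = 2*m+3" "2*Suc m = 2*m+2" "2*Suc m + 2 = 2*m+4" by simp_all
  ultimately show ?case by (simp only:)
qed

lemma even_form:
  assumes "1 \<le> m"
  shows "cartan (2*m) x y =
     mat2 (gfib y (shift x) (2*m - 1)) (gfib y (shift x) (2*m)) (gfib x y (2*m)) (gfib x y (2*m + 1))"
proof -
  obtain k where k: "m = k + 1" using assms by (metis add.commute le_Suc_ex)
  have "cartan (2*k+2) x y = mat2 (gfib y (shift x) (2*k + 1)) (gfib y (shift x) (2*k+2))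
      (gfib x y (2*k + 2)) (gfib x y (2*k + 3))"
    by (rule step_even[OF odd_form])
  moreover have "2*m = 2*k+2" "2*m - 1 = 2*k+1" "2*m+1 = 2*k+3" using k by simp_all
  ultimately show ?thesis by (simp only:)
qed

theorem lemma4p1:
  fixes x y :: "nat \<Rightarrow> nat"
  assumes xpos: "\<forall>i\<ge>1. x i > 0"
    and ypos: "\<forall>i\<ge>1. y i > 0"
  shows "(\<forall>m\<ge>1.
            cartan (2*m) x y = mmult2 (cartan (2*m - 1) x y) (mat2 1 (y m) 0 1)
          \<and> cartan (2*m) x y =
              mat2 (gfib y (shift x) (2*m - 1)) (gfib y (shift x) (2*m))
                   (gfib x y (2*m)) (gfib x y (2*m + 1)))
       \<and> (\<forall>m::nat.
            cartan (2*m + 1) x y = mmult2 (cartan (2*m) x y) (mat2 1 0 (x (m + 1)) 1)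
          \<and> cartan (2*m + 1) x y =
              mat2 (gfib y (shift x) (2*m + 1)) (gfib y (shift x) (2*m))
                   (gfib x y (2*m + 2)) (gfib x y (2*m + 1)))"
  using cartE even_form cartO odd_form by blast

end
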